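(* Let $\mu\in\mathbb P^\vee$ and let $V$ be a top graded $Y_\mu(\mathfrak g)$-module. Then $V$ is of co-highest $\ell$-weight if and only if its top weight space equals the subspace $\{v\in V: x^+_{i,n}v=0 \text{ for all } (i,n)\in I\times\mathbb N\}$.
   Context: Let $\mathfrak g$ be a finite-dimensional complex simple Lie algebra with Cartan subalgebra $\mathfrak h$, Dynkin nodes $I$, simple roots $\alpha_i$, invariant form $(\,,\,)$ on $\mathfrak h^*$ with $d_i=(\alpha_i,\alpha_i)/2$ coprime positive integers, $c_{ij}=2(\alpha_i,\alpha_j)/(\alpha_i,\alpha_i)$, $d_{ij}=(\alpha_i,\alpha_j)/2$, fundamental coweights $\varpi_i^\vee$ ($\langle\varpi_i^\vee,\alpha_j\rangle=\delta_{ij}$), $\mathbb P^\vee=\bigoplus\mathbb Z\varpi_i^\vee$, $\mathbb Q_-=-\bigoplus\mathbb N\alpha_i$. For $\mu\in\mathbb P^\vee$, $Y_\mu(\mathfrak g)$ is the algebra generated by $x^\pm_{i,n},\xi_{i,p}$ ($i\in I,n\in\mathbb N,p\in\mathbb Z$) with relations $[\xi_{i,p},\xi_{j,q}]=0$, $[x^+_{i,m},x^-_{j,n}]=\delta_{ij}\xi_{i,m+n}$, $[\xi_{i,p+1},x^\pm_{j,n}]-[\xi_{i,p},x^\pm_{j,n+1}]=\pm d_{ij}(\xi_{i,p}x^\pm_{j,n}+x^\pm_{j,n}\xi_{i,p})$, $[x^\pm_{i,m+1},x^\pm_{j,n}]-[x^\pm_{i,m},x^\pm_{j,n+1}]=\pm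 d_{ij}(x^\pm_{i,m}x^\pm_{j,n}+x^\pm_{j,n}x^\pm_{i,m})$, $\mathrm{ad}_{x^\pm_{i,0}}^{1-c_{ij}}(x^\pm_{j,0})=0$ ($i\ne j$), $\xi_{i,-\langle\mu,\alpha_i\rangle-1}=1$, $\xi_{i,p}=0$ for $p<-\langle\mu,\alpha_i\rangle-1$. For a $Y_\mu(\mathfrak g)$-module $V$ and $\beta\in\mathfrak h^*$, the weight space is $V_\beta=\{v: \xi_{i,-\langle\mu,\alpha_i\rangle}v=(\alpha_i,\beta)v\ \forall i\}$; $V$ is a weight module if it is the direct sum of its weight spaces. $V$ is top graded if it is a weight module and there is $\lambda\in\mathfrak h^*$ with all weights in $\lambda+\mathbb Q_-$ and $\dim V_\lambda=1$; $V_\lambda$ is the top weight space. $V$ is of co-highest $\ell$-weight if it is top graded and its top weight space is contained in every nonzero submodule of $V$. *)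

theory Defs
  imports "HOL-Analysis.Analysis"
begin

text \<open>Cartan data of a finite-dimensional complex simple Lie algebra, given by the
  Gram matrix B i j = (alpha_i, alpha_j) of the simple roots, indexed by the finite
  type 'i of Dynkin nodes.  Here d_i = B i i / 2, c_ij = 2 B i j / B i i.\<close>

definition simple_cartan_datum :: "('i::finite \<Rightarrow> 'i \<Rightarrow> int) \<Rightarrow> bool" where
  "simple_cartan_datum B \<longleftrightarrow>
     (\<forall>i j. B i j = B j i) \<and>
     (\<forall>i. B i i > 0 \<and> even (B i i)) \<and>
     (\<forall>i j. i \<noteq> j \<longrightarrow> B i j \<le> 0 \<and> B i i dvd 2 * B i j) \<and>
     (\<forall>c :: 'i \<Rightarrow> real. (\<exists>i. c i \<noteq> 0) \<longrightarrow> (\<Sum>i\<in>UNIV. \<Sum>j\<in>UNIV. c i * c j * of_int (B i j)) > 0) \<and>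
     (\<forall>J :: 'i set. J \<noteq> {} \<and> J \<noteq> UNIV \<longrightarrow> (\<exists>j\<in>J. \<exists>k. k \<notin> J \<and> B j k \<noteq> 0)) \<and>
     Gcd (range (\<lambda>i. B i i div 2)) = 1"

definition cartan_entry :: "('i \<Rightarrow> 'i \<Rightarrow> int) \<Rightarrow> 'i \<Rightarrow> 'i \<Rightarrow> int" where
  "cartan_entry B i j = (2 * B i j) div (B i i)"

definition dd :: "('i \<Rightarrow> 'i \<Rightarrow> int) \<Rightarrow> 'i \<Rightarrow> 'i \<Rightarrow> complex" where
  "dd B i j = of_int (B i j) / 2"

definition comm :: "('v::ab_group_add \<Rightarrow> 'v) \<Rightarrow> ('v \<Rightarrow> 'v) \<Rightarrow> 'v \<Rightarrow> 'v" where
  "comm A C = (\<lambda>v. A (C v) - C (A v))"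

definition anticomm :: "('v::ab_group_add \<Rightarrow> 'v) \<Rightarrow> ('v \<Rightarrow> 'v) \<Rightarrow> 'v \<Rightarrow> 'v" where
  "anticomm A C = (\<lambda>v. A (C v) + C (A v))"

text \<open>The coweight mu is given by
  the integers mu i = <mu, alpha_i>.\<close>

definition yangian_module ::
  "('i::finite \<Rightarrow> 'i \<Rightarrow> int) \<Rightarrow> ('i \<Rightarrow> int) \<Rightarrow> (complex \<Rightarrow> 'v::ab_group_add \<Rightarrow> 'v)
   \<Rightarrow> ('i \<Rightarrow> nat \<Rightarrow> 'v \<Rightarrow> 'v) \<Rightarrow> ('i \<Rightarrow> nat \<Rightarrow> 'v \<Rightarrow> 'v) \<Rightarrow> ('i \<Rightarrow> int \<Rightarrow> 'v \<Rightarrow> 'v) \<Rightarrow> bool"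
where
  "yangian_module B mu sc xp xm xi \<longleftrightarrow>
     vector_space sc \<and>
     (\<forall>i n. Vector_Spaces.linear sc sc (xp i n)) \<and>
     (\<forall>i n. Vector_Spaces.linear sc sc (xm i n)) \<and>
     (\<forall>i p. Vector_Spaces.linear sc sc (xi i p)) \<and>
     (\<forall>i j p q. comm (xi i p) (xi j q) = (\<lambda>v. 0)) \<and>
     (\<forall>i j m n. comm (xp i m) (xm j n) = (if i = j then xi i (int (m + n)) else (\<lambda>v. 0))) \<and>
     (\<forall>i j p n. (\<lambda>v. comm (xi i (p + 1)) (xp j n) v - comm (xi i p) (xp j (n + 1)) v)
                = (\<lambda>v. sc (dd B i j) (anticomm (xi i p) (xp j n) v))) \<and>
     (\<forall>i j p n. (\<lambda>v. comm (xi i (p + 1)) (xm j n) v - comm (xi i p) (xm j (n + 1)) v)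
                = (\<lambda>v. sc (- dd B i j) (anticomm (xi i p) (xm j n) v))) \<and>
     (\<forall>i j m n. (\<lambda>v. comm (xp i (m + 1)) (xp j n) v - comm (xp i m) (xp j (n + 1)) v)
                = (\<lambda>v. sc (dd B i j) (anticomm (xp i m) (xp j n) v))) \<and>
     (\<forall>i j m n. (\<lambda>v. comm (xm i (m + 1)) (xm j n) v - comm (xm i m) (xm j (n + 1)) v)
                = (\<lambda>v. sc (- dd B i j) (anticomm (xm i m) (xm j n) v))) \<and>
     (\<forall>i j. i \<noteq> j \<longrightarrow>
        ((comm (xp i 0)) ^^ nat (1 - cartan_entry B i j)) (xp j 0) = (\<lambda>v. 0)) \<and>
     (\<forall>i j. i \<noteq> j \<longrightarrow>
        ((comm (xm i 0)) ^^ nat (1 - cartan_entry B i j)) (xm j 0) = (\<lambda>v. 0)) \<and>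
     (\<forall>i. xi i (- mu i - 1) = (\<lambda>v. v)) \<and>
     (\<forall>i p. p < - mu i - 1 \<longrightarrow> xi i p = (\<lambda>v. 0))"

text \<open>Elements beta of h^* are written in the basis of simple roots:
  beta = sum_j b j alpha_j, with b :: 'i => complex.  Then (alpha_i, beta) = sum_j b j B i j.\<close>

definition pair_root :: "('i::finite \<Rightarrow> 'i \<Rightarrow> int) \<Rightarrow> 'i \<Rightarrow> ('i \<Rightarrow> complex) \<Rightarrow> complex" where
  "pair_root B i b = (\<Sum>j\<in>UNIV. b j * of_int (B i j))"

definition weight_space ::
  "('i::finite \<Rightarrow> 'i \<Rightarrow> int) \<Rightarrow> ('i \<Rightarrow> int) \<Rightarrow> (complex \<Rightarrow> 'v \<Rightarrow> 'v)
   \<Rightarrow> ('i \<Rightarrow> int \<Rightarrow> 'v \<Rightarrow> 'v) \<Rightarrow> ('i \<Rightarrow> complex) \<Rightarrow> 'v set" where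
  "weight_space B mu sc xi beta = {v. \<forall>i. xi i (- mu i) v = sc (pair_root B i beta) v}"

definition weight_module ::
  "('i::finite \<Rightarrow> 'i \<Rightarrow> int) \<Rightarrow> ('i \<Rightarrow> int) \<Rightarrow> (complex \<Rightarrow> 'v::ab_group_add \<Rightarrow> 'v)
   \<Rightarrow> ('i \<Rightarrow> int \<Rightarrow> 'v \<Rightarrow> 'v) \<Rightarrow> bool" where
  "weight_module B mu sc xi \<longleftrightarrow>
     (\<forall>v. \<exists>S f. finite S \<and> (\<forall>beta\<in>S. f beta \<in> weight_space B mu sc xi beta)
                \<and> v = (\<Sum>beta\<in>S. f beta)) \<and>
     (\<forall>S f. finite S \<and> (\<forall>beta\<in>S. f beta \<in> weight_space B mu sc xi beta)
                \<and> (\<Sum>beta\<in>S. f beta) = 0 \<longrightarrow> (\<forall>beta\<in>S. f beta = 0))"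

definition top_graded_at ::
  "('i::finite \<Rightarrow> 'i \<Rightarrow> int) \<Rightarrow> ('i \<Rightarrow> int) \<Rightarrow> (complex \<Rightarrow> 'v::ab_group_add \<Rightarrow> 'v)
   \<Rightarrow> ('i \<Rightarrow> int \<Rightarrow> 'v \<Rightarrow> 'v) \<Rightarrow> ('i \<Rightarrow> complex) \<Rightarrow> bool" where
  "top_graded_at B mu sc xi lam \<longleftrightarrow>
     weight_module B mu sc xi \<and>
     (\<forall>beta. weight_space B mu sc xi beta \<noteq> {0} \<longrightarrow>
        (\<forall>i. \<exists>n::nat. beta i = lam i - of_nat n)) \<and>
     vector_space.dim sc (weight_space B mu sc xi lam) = 1"

definition top_graded ::
  "('i::finite \<Rightarrow> 'i \<Rightarrow> int) \<Rightarrow> ('i \<Rightarrow> int) \<Rightarrow> (complex \<Rightarrow> 'v::ab_group_add \<Rightarrow> 'v)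
   \<Rightarrow> ('i \<Rightarrow> int \<Rightarrow> 'v \<Rightarrow> 'v) \<Rightarrow> bool" where
  "top_graded B mu sc xi \<longleftrightarrow> (\<exists>lam. top_graded_at B mu sc xi lam)"

definition is_submodule ::
  "(complex \<Rightarrow> 'v::ab_group_add \<Rightarrow> 'v) \<Rightarrow> ('i \<Rightarrow> nat \<Rightarrow> 'v \<Rightarrow> 'v) \<Rightarrow> ('i \<Rightarrow> nat \<Rightarrow> 'v \<Rightarrow> 'v)
   \<Rightarrow> ('i \<Rightarrow> int \<Rightarrow> 'v \<Rightarrow> 'v) \<Rightarrow> 'v set \<Rightarrow> bool" where
  "is_submodule sc xp xm xi W \<longleftrightarrow>
     module.subspace sc W \<and>
     (\<forall>i n. \<forall>w\<in>W. xp i n w \<in> W) \<and> (\<forall>i n. \<forall>w\<in>W. xm i n w \<in> W) \<and>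
     (\<forall>i p. \<forall>w\<in>W. xi i p w \<in> W)"

definition co_highest_l_weight ::
  "('i::finite \<Rightarrow> 'i \<Rightarrow> int) \<Rightarrow> ('i \<Rightarrow> int) \<Rightarrow> (complex \<Rightarrow> 'v::ab_group_add \<Rightarrow> 'v)
   \<Rightarrow> ('i \<Rightarrow> nat \<Rightarrow> 'v \<Rightarrow> 'v) \<Rightarrow> ('i \<Rightarrow> nat \<Rightarrow> 'v \<Rightarrow> 'v) \<Rightarrow> ('i \<Rightarrow> int \<Rightarrow> 'v \<Rightarrow> 'v) \<Rightarrow> bool" where
  "co_highest_l_weight B mu sc xp xm xi \<longleftrightarrow>
     (\<exists>lam. top_graded_at B mu sc xi lam \<and>
        (\<forall>W. is_submodule sc xp xm xi W \<and> W \<noteq> {0} \<longrightarrow> weight_space B mu sc xi lam \<subseteq> W))"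

end

theory Submission
  imports Defs
begin

definition ev :: "'i \<Rightarrow> 'i \<Rightarrow> complex" where "ev j = (\<lambda>k. if k = j then 1 else 0)"

definition sh :: "('i \<Rightarrow> complex) \<Rightarrow> ('i \<Rightarrow> complex) \<Rightarrow> 'i \<Rightarrow> complex" where
  "sh d g = (\<lambda>k. g k + d k)"

locale ymod =
  fixes B :: "'i::finite \<Rightarrow> 'i \<Rightarrow> int" and mu :: "'i \<Rightarrow> int"
    and sc :: "complex \<Rightarrow> 'v::ab_group_add \<Rightarrow> 'v"
    and xp xm :: "'i \<Rightarrow> nat \<Rightarrow> 'v \<Rightarrow> 'v" and xi :: "'i \<Rightarrow> int \<Rightarrow> 'v \<Rightarrow> 'v"
  assumes ym: "yangian_module B mu sc xp xm xi"
begin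

lemmas ymp = ym[unfolded yangian_module_def]

lemma vs: "vector_space sc" using ymp by meson

sublocale vector_space sc by (rule vs)

lemma mh_xp: "module_hom sc sc (xp i n)" using ym unfolding yangian_module_def by (simp add: module_hom_iff_linear)
lemma mh_xm: "module_hom sc sc (xm i n)" using ym unfolding yangian_module_def by (simp add: module_hom_iff_linear)
lemma mh_xi: "module_hom sc sc (xi i p)" using ym unfolding yangian_module_def by (simp add: module_hom_iff_linear)

lemmas xp_add[simp] = module_hom.add[OF mh_xp] and xp_scale[simp] = module_hom.scale[OF mh_xp]
  and xp_zero[simp] = module_hom.zero[OF mh_xp] and xp_sum = module_hom.sum[OF mh_xp]
  and xp_diff[simp] = module_hom.diff[OF mh_xp]
lemmas xm_add[simp] = module_hom.add[OF mh_xm] and xm_scale[simp] = module_hom.scale[OF mh_xm]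
  and xm_zero[simp] = module_hom.zero[OF mh_xm] and xm_sum = module_hom.sum[OF mh_xm]
  and xm_diff[simp] = module_hom.diff[OF mh_xm]
lemmas xi_add[simp] = module_hom.add[OF mh_xi] and xi_scale[simp] = module_hom.scale[OF mh_xi]
  and xi_zero[simp] = module_hom.zero[OF mh_xi] and xi_sum = module_hom.sum[OF mh_xi]
  and xi_diff[simp] = module_hom.diff[OF mh_xi]

lemma xi_comm: "xi i p (xi j q v) = xi j q (xi i p v)"
proof -
  have "comm (xi i p) (xi j q) = (\<lambda>v. 0)" using ymp by meson
  then have "comm (xi i p) (xi j q) v = 0" by simp
  then show ?thesis unfolding comm_def by simp
qed

lemma xpxm: "xp i m (xm j n v) = xm j n (xp i m v) + (if i = j then xi i (int (m + n)) v else 0)"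
proof -
  have "comm (xp i m) (xm j n) = (if i = j then xi i (int (m + n)) else (\<lambda>v. 0))"
    using ymp by meson
  then have "comm (xp i m) (xm j n) v = (if i = j then xi i (int (m + n)) v else 0)" 
    by (cases "i = j") simp_all
  then show ?thesis unfolding comm_def by (simp add: algebra_simps)
qed

lemma xi_xp_rel: "xi i (p + 1) (xp j n v) - xp j n (xi i (p+1) v) - (xi i p (xp j (n+1) v) - xp j (n+1) (xi i p v))
   = sc (dd B i j) (xi i p (xp j n v) + xp j n (xi i p v))"
proof -
  have "(\<lambda>v. comm (xi i (p + 1)) (xp j n) v - comm (xi i p) (xp j (n + 1)) v)
                = (\<lambda>v. sc (dd B i j) (anticomm (xi i p) (xp j n) v))" using ymp by meson
  from fun_cong[OF this, of v] show ?thesis unfolding comm_def anticomm_def by simp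
qed

lemma xi_xm_rel: "xi i (p + 1) (xm j n v) - xm j n (xi i (p+1) v) - (xi i p (xm j (n+1) v) - xm j (n+1) (xi i p v))
   = sc (- dd B i j) (xi i p (xm j n v) + xm j n (xi i p v))"
proof -
  have "(\<lambda>v. comm (xi i (p + 1)) (xm j n) v - comm (xi i p) (xm j (n + 1)) v)
                = (\<lambda>v. sc (- dd B i j) (anticomm (xi i p) (xm j n) v))" using ymp by meson
  from fun_cong[OF this, of v] show ?thesis unfolding comm_def anticomm_def by simp
qed

lemma xi_one: "xi i (- mu i - 1) v = v" using ym unfolding yangian_module_def by simp
lemma xi_low: "p < - mu i - 1 \<Longrightarrow> xi i p v = 0" using ym unfolding yangian_module_def by simp

abbreviation Wt where "Wt \<equiv> weight_space B mu sc xi"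

lemma xi0_id: "xi i (- mu i) = xi i ((- mu i - 1) + 1)" by simp

lemma wt_zero[simp]: "0 \<in> Wt g" unfolding weight_space_def by simp
lemma wt_add: "a \<in> Wt g \<Longrightarrow> b \<in> Wt g \<Longrightarrow> a + b \<in> Wt g"
  unfolding weight_space_def by (simp add: scale_right_distrib)
lemma wt_scale: "a \<in> Wt g \<Longrightarrow> sc c a \<in> Wt g"
  unfolding weight_space_def by (simp add: scale_left_commute)
lemma wt_xi: "a \<in> Wt g \<Longrightarrow> xi k p a \<in> Wt g"
  unfolding weight_space_def by (simp add: xi_comm[of _ "- mu _" k p])

lemma pair_root_shift: "pair_root B i (\<lambda>k. g k + c * ev j k) = pair_root B i g + c * of_int (B i j)"
proof -
  have "(\<Sum>k\<in>UNIV. (g k + c * ev j k) * of_int (B i k)) = (\<Sum>k\<in>UNIV. g k * of_int (B i k)) + (\<Sum>k\<in>UNIV. c * ev j k * of_int (B i k))"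
    by (simp add: distrib_right sum.distrib)
  moreover have "(\<Sum>k\<in>UNIV. c * ev j k * of_int (B i k)) = c * of_int (B i j)"
  proof -
    have "(\<lambda>k. c * ev j k * of_int (B i k)) = (\<lambda>k. if k = j then c * of_int (B i j) else 0)"
      by (auto simp: ev_def)
    then show ?thesis by (simp only:) simp
  qed
  ultimately show ?thesis unfolding pair_root_def by simp
qed

lemma two_dd: "sc (dd B i j) (x + x) = sc (of_int (B i j)) x"
proof -
  have "x + x = sc 2 x" by (metis one_add_one scale_left_distrib scale_one)
  then show ?thesis by (simp add: dd_def)
qed

lemma wt_xp: assumes "a \<in> Wt g" shows "xp j n a \<in> Wt (\<lambda>k. g k + 1 * ev j k)"
  unfolding weight_space_def
proof (intro CollectI allI)
  fix i
  have r: "xi i (- mu i - 1 + 1) (xp j n a) - xp j n (xi i (- mu i - 1 + 1) a) = sc (dd B i j) (xp j n a + xp j n a)"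
    using xi_xp_rel[of i "- mu i - 1" j n a] by (simp add: xi_one)
  have "xi i (- mu i) (xp j n a) = xp j n (xi i (- mu i) a) + sc (of_int (B i j)) (xp j n a)"
    using r unfolding two_dd by (simp add: algebra_simps)
  also have "\<dots> = sc (pair_root B i g + of_int (B i j)) (xp j n a)"
    using assms unfolding weight_space_def by (simp add: scale_left_distrib)
  finally show "xi i (- mu i) (xp j n a) = sc (pair_root B i (\<lambda>k. g k + 1 * ev j k)) (xp j n a)"
    by (simp only: pair_root_shift) simp
qed

lemma wt_xm: assumes "a \<in> Wt g" shows "xm j n a \<in> Wt (\<lambda>k. g k + (-1) * ev j k)"
  unfolding weight_space_def
proof (intro CollectI allI)
  fix i
  have r: "xi i (- mu i - 1 + 1) (xm j n a) - xm j n (xi i (- mu i - 1 + 1) a) = sc (- dd B i j) (xm j n a + xm j n a)"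
    using xi_xm_rel[of i "- mu i - 1" j n a] by (simp add: xi_one)
  have "sc (- dd B i j) (xm j n a + xm j n a) = sc (- of_int (B i j)) (xm j n a)"
    by (metis two_dd scale_minus_left)
  then have "xi i (- mu i) (xm j n a) = xm j n (xi i (- mu i) a) + sc (- of_int (B i j)) (xm j n a)"
    using r by (simp add: algebra_simps)
  also have "\<dots> = sc (pair_root B i g + (-1) * of_int (B i j)) (xm j n a)"
    using assms unfolding weight_space_def by (simp add: scale_left_diff_distrib)
  finally show "xi i (- mu i) (xm j n a) = sc (pair_root B i (\<lambda>k. g k + (-1) * ev j k)) (xm j n a)"
    by (simp only: pair_root_shift)
qed

lemma wt_xp': "a \<in> Wt g \<Longrightarrow> xp j n a \<in> Wt (sh (ev j) g)"
  using wt_xp[of a g j n] by (simp add: sh_def)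
lemma wt_xm': "a \<in> Wt g \<Longrightarrow> xm j n a \<in> Wt (sh (\<lambda>k. - ev j k) g)"
  using wt_xm[of a g j n] by (simp add: sh_def)

lemma dim1_basis: assumes "dim (Wt g) = 1"
  shows "\<exists>b\<in>Wt g. b \<noteq> 0 \<and> Wt g \<subseteq> range (\<lambda>k. sc k b)"
proof -
  obtain Bs where Bs: "Bs \<subseteq> Wt g" "independent Bs" "Wt g \<subseteq> span Bs" "card Bs = dim (Wt g)"
    by (rule basis_exists)
  then obtain b where "Bs = {b}" using assms by (metis card_1_singletonE)
  then show ?thesis using Bs by (auto simp: span_singleton dependent_zero)
qed

lemma below_nz: assumes "top_graded_at B mu sc xi lam0" "w \<in> Wt g" "w \<noteq> 0"
  shows "\<exists>m::'i \<Rightarrow> nat. g = (\<lambda>i. lam0 i - of_nat (m i))"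
proof -
  have "Wt g \<noteq> {0}" using assms(2,3) by auto
  then have "\<forall>i. \<exists>n::nat. g i = lam0 i - of_nat n" using assms(1) unfolding top_graded_at_def by blast
  then obtain m where "\<forall>i. g i = lam0 i - of_nat (m i)" by metis
  then show ?thesis by auto
qed

lemma indep: assumes "top_graded_at B mu sc xi lam0" "finite S" "\<forall>b\<in>S. f b \<in> Wt b" "sum f S = 0"
  shows "\<forall>b\<in>S. f b = 0"
proof -
  have "weight_module B mu sc xi" using assms unfolding top_graded_at_def by simp
  then show ?thesis using assms(2-) unfolding weight_module_def by blast
qed

lemma decomp: assumes "top_graded_at B mu sc xi lam0"
  obtains S f where "finite S" "\<forall>b\<in>S. f b \<in> Wt b" "v = sum f S"
proof -
  have "weight_module B mu sc xi" using assms unfolding top_graded_at_def by simp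
  then have "\<exists>S f. finite S \<and> (\<forall>b\<in>S. f b \<in> Wt b) \<and> v = sum f S" unfolding weight_module_def by blast
  then show ?thesis using that by blast
qed

lemma sh_inj: "inj_on (sh d) T"
  by (rule inj_onI) (simp add: sh_def fun_eq_iff)

lemma sh_back[simp]: "sh (\<lambda>k. - d k) (sh d g) = g" by (simp add: sh_def)

lemma sum_sh: "(\<Sum>g\<in>T. h g) = (\<Sum>g'\<in>sh d ` T. h (sh (\<lambda>k. - d k) g'))"
  by (simp add: sum.reindex[OF sh_inj])

lemma wt_neg: "a \<in> Wt g \<Longrightarrow> - a \<in> Wt g"
  using wt_scale[of a g "-1"] by (simp add: scale_minus_left)

inductive_set Gen :: "'v \<Rightarrow> 'v set" for u where
  G_u: "u \<in> Gen u"
| G0: "0 \<in> Gen u"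
| Gadd: "a \<in> Gen u \<Longrightarrow> b \<in> Gen u \<Longrightarrow> a + b \<in> Gen u"
| Gsc: "a \<in> Gen u \<Longrightarrow> sc c a \<in> Gen u"
| Gxm: "a \<in> Gen u \<Longrightarrow> xm j n a \<in> Gen u"
| Gxi: "a \<in> Gen u \<Longrightarrow> xi k p a \<in> Gen u"

lemma Gdiff: "a \<in> Gen u \<Longrightarrow> b \<in> Gen u \<Longrightarrow> a - b \<in> Gen u"
  using Gadd[of a u "sc (-1) b"] Gsc[of b u "-1"] by (simp add: scale_minus_left)

lemma xp_xi_Gen: assumes "a \<in> Gen u" "\<forall>n. xp i n a \<in> Gen u" shows "xp i n (xi k p a) \<in> Gen u"
proof (cases "p < - mu k - 1")
  case True
  then show ?thesis by (simp add: xi_low G0)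
next
  case False
  then have "- mu k - 1 \<le> p" by simp
  then have "\<forall>n. xp i n (xi k p a) \<in> Gen u"
  proof (induction p rule: int_ge_induct)
    case base
    then show ?case using assms by (simp add: xi_one)
  next
    case (step q)
    show ?case
    proof
      fix n
      have rel: "xi k (q + 1) (xp i n a) - xp i n (xi k (q+1) a) - (xi k q (xp i (n+1) a) - xp i (n+1) (xi k q a))
         = sc (dd B k i) (xi k q (xp i n a) + xp i n (xi k q a))" by (rule xi_xp_rel)
      have eq: "xp i n (xi k (q+1) a) = xi k (q + 1) (xp i n a) - (xi k q (xp i (n+1) a) - xp i (n+1) (xi k q a))
         - sc (dd B k i) (xi k q (xp i n a) + xp i n (xi k q a))"
        using rel by (metis add_diff_cancel_left' diff_add_cancel diff_diff_eq2)
      show "xp i n (xi k (q+1) a) \<in> Gen u" unfolding eq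
        using step.IH assms by (intro Gdiff Gadd Gxi Gsc) auto
    qed
  qed
  then show ?thesis by blast
qed

lemma xp_Gen: "a \<in> Gen u \<Longrightarrow> \<forall>i n. xp i n u = 0 \<Longrightarrow> xp i n a \<in> Gen u"
proof (induction a arbitrary: i n rule: Gen.induct)
  case G_u
  then show ?case by (simp add: G0)
next
  case G0
  then show ?case by (simp add: Gen.G0)
next
  case (Gadd a b)
  then show ?case by (simp add: Gen.Gadd)
next
  case (Gsc a c)
  then show ?case by (simp add: Gen.Gsc)
next
  case (Gxm a j m)
  then show ?case unfolding xpxm by (intro Gen.Gadd Gen.Gxm) (auto intro: Gen.Gxi Gen.G0)
next
  case (Gxi a k p)
  then show ?case by (intro xp_xi_Gen) auto
qed

lemma Gen_sub: "\<forall>i n. xp i n u = 0 \<Longrightarrow> is_submodule sc xp xm xi (Gen u)"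
  unfolding is_submodule_def subspace_def
  by (auto intro: G0 Gadd Gsc Gxm Gxi xp_Gen)

definition lowsum where
  "lowsum b x \<longleftrightarrow> (\<exists>T g. finite T \<and> (\<forall>c\<in>T. g c \<in> Wt c \<and> (\<exists>m::'i\<Rightarrow>nat. c = (\<lambda>k. b k - of_nat (m k)))) \<and> x = sum g T)"

lemma Gen_low: "a \<in> Gen u \<Longrightarrow> u \<in> Wt b \<Longrightarrow> lowsum b a"
proof (induction a rule: Gen.induct)
  case G_u
  show ?case unfolding lowsum_def
    by (rule exI[of _ "{b}"], rule exI[of _ "\<lambda>_. u"]) (use G_u in \<open>auto intro!: exI[of _ "\<lambda>_. 0"]\<close>)
next
  case G0
  show ?case unfolding lowsum_def by (rule exI[of _ "{}"]) auto
next
  case (Gadd a1 a2)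
  then obtain T1 g1 T2 g2 where h1: "finite T1" "\<forall>c\<in>T1. g1 c \<in> Wt c \<and> (\<exists>m::'i\<Rightarrow>nat. c = (\<lambda>k. b k - of_nat (m k)))" "a1 = sum g1 T1"
    and h2: "finite T2" "\<forall>c\<in>T2. g2 c \<in> Wt c \<and> (\<exists>m::'i\<Rightarrow>nat. c = (\<lambda>k. b k - of_nat (m k)))" "a2 = sum g2 T2"
    unfolding lowsum_def by blast
  define g where "g c = (if c \<in> T1 then g1 c else 0) + (if c \<in> T2 then g2 c else 0)" for c
  have s1: "sum (\<lambda>c. if c \<in> T1 then g1 c else 0) (T1 \<union> T2) = sum g1 T1"
    using sum.inter_restrict[of "T1 \<union> T2" g1 T1] h1 h2 by (simp add: Int_absorb1)
  have s2: "sum (\<lambda>c. if c \<in> T2 then g2 c else 0) (T1 \<union> T2) = sum g2 T2"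
    using sum.inter_restrict[of "T1 \<union> T2" g2 T2] h1 h2 by (simp add: Int_absorb1)
  have "a1 + a2 = sum g (T1 \<union> T2)" unfolding g_def sum.distrib s1 s2 h1(3) h2(3) ..
  moreover have "\<forall>c\<in>T1 \<union> T2. g c \<in> Wt c \<and> (\<exists>m::'i\<Rightarrow>nat. c = (\<lambda>k. b k - of_nat (m k)))"
    using h1 h2 unfolding g_def by (auto intro!: wt_add)
  ultimately show ?case unfolding lowsum_def using h1 h2 by blast
next
  case (Gsc a c)
  then obtain T g where h: "finite T" "\<forall>c\<in>T. g c \<in> Wt c \<and> (\<exists>m::'i\<Rightarrow>nat. c = (\<lambda>k. b k - of_nat (m k)))" "a = sum g T"
    unfolding lowsum_def by blast
  have "sc c a = sum (\<lambda>x. sc c (g x)) T" using h(3) by (simp add: scale_sum_right)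
  then show ?case unfolding lowsum_def using h by (intro exI[of _ T] exI[of _ "\<lambda>x. sc c (g x)"]) (auto intro: wt_scale)
next
  case (Gxi a k p)
  then obtain T g where h: "finite T" "\<forall>c\<in>T. g c \<in> Wt c \<and> (\<exists>m::'i\<Rightarrow>nat. c = (\<lambda>k. b k - of_nat (m k)))" "a = sum g T"
    unfolding lowsum_def by blast
  have "xi k p a = sum (\<lambda>x. xi k p (g x)) T" using h(3) by (simp add: xi_sum)
  then show ?case unfolding lowsum_def using h by (intro exI[of _ T] exI[of _ "\<lambda>x. xi k p (g x)"]) (auto intro: wt_xi)
next
  case (Gxm a j n)
  then obtain T g where h: "finite T" "\<forall>c\<in>T. g c \<in> Wt c \<and> (\<exists>m::'i\<Rightarrow>nat. c = (\<lambda>k. b k - of_nat (m k)))" "a = sum g T"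
    unfolding lowsum_def by blast
  define d where "d = (\<lambda>k. - ev j k)"
  define g' where "g' c = xm j n (g (sh (\<lambda>k. - d k) c))" for c
  have "xm j n a = sum (\<lambda>x. xm j n (g x)) T" using h(3) by (simp add: xm_sum)
  also have "\<dots> = sum g' (sh d ` T)" unfolding g'_def by (rule sum_sh)
  finally have e: "xm j n a = sum g' (sh d ` T)" .
  have "\<forall>c\<in>sh d ` T. g' c \<in> Wt c \<and> (\<exists>m::'i\<Rightarrow>nat. c = (\<lambda>k. b k - of_nat (m k)))"
  proof
    fix c assume "c \<in> sh d ` T"
    then obtain c0 where c0: "c0 \<in> T" "c = sh d c0" by blast
    then have gc: "g' c = xm j n (g c0)" unfolding g'_def by simp
    obtain m where m: "c0 = (\<lambda>k. b k - of_nat (m k))" using h(2) c0 by blast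
    have "c = (\<lambda>k. b k - of_nat (m k + (if k = j then 1 else 0)))"
      unfolding c0(2) m sh_def d_def ev_def by (auto simp: fun_eq_iff)
    moreover have "g' c \<in> Wt c"
    proof -
      have "g c0 \<in> Wt c0" using h(2) c0(1) by blast
      then have "xm j n (g c0) \<in> Wt (sh d c0)" unfolding d_def by (rule wt_xm')
      then show ?thesis using gc c0(2) by simp
    qed
    ultimately show "g' c \<in> Wt c \<and> (\<exists>m::'i\<Rightarrow>nat. c = (\<lambda>k. b k - of_nat (m k)))"
      by (intro conjI exI[of _ "\<lambda>k. m k + (if k = j then 1 else 0)"])
  qed
  then show ?case unfolding lowsum_def using h(1) e by blast
qed

lemma nat_cancel: "(L::complex) = L - of_nat a - of_nat c \<Longrightarrow> a = 0"
proof -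
  assume h: "L = L - of_nat a - of_nat c"
  then have "of_nat (a + c) = (0::complex)" by (simp add: algebra_simps)
  then show "a = 0" by (simp only: of_nat_eq_0_iff)
qed

lemma coord_shift: "(\<lambda>k. L k - of_nat (a k)) = sh (ev i) (\<lambda>k. L k - of_nat (c k)) \<Longrightarrow> c = (\<lambda>k. a k + (if k = i then 1 else 0))"
proof
  fix k assume h: "(\<lambda>k. L k - of_nat (a k)) = sh (ev i) (\<lambda>k. L k - of_nat (c k))"
  from fun_cong[OF h, of k] have e: "of_nat (c k) = (of_nat (a k) + ev i k :: complex)"
    by (simp add: sh_def algebra_simps)
  show "c k = a k + (if k = i then 1 else 0)"
  proof (cases "k = i")
    case True
    then have "(of_nat (c k) :: complex) = of_nat (a k + 1)" using e by (simp add: ev_def)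
    then show ?thesis using True by (simp only: of_nat_eq_iff) simp
  next
    case False
    then have "(of_nat (c k) :: complex) = of_nat (a k)" using e by (simp add: ev_def)
    then show ?thesis using False by (simp only: of_nat_eq_iff) simp
  qed
qed

lemma no_hw:
  assumes tg: "top_graded_at B mu sc xi lam"
    and coh: "\<forall>W. is_submodule sc xp xm xi W \<and> W \<noteq> {0} \<longrightarrow> Wt lam \<subseteq> W"
    and u: "u \<in> Wt b" "u \<noteq> 0" "\<forall>i n. xp i n u = 0" "b \<noteq> lam"
  shows False
proof -
  have "Gen u \<noteq> {0}" using G_u u(2) by blast
  then have sub: "Wt lam \<subseteq> Gen u" using coh Gen_sub[OF u(3)] by blast
  have "dim (Wt lam) = 1" using tg unfolding top_graded_at_def by simp
  then obtain bb where bb: "bb \<in> Wt lam" "bb \<noteq> 0" using dim1_basis by blast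
  have "lowsum b bb" using Gen_low[OF _ u(1)] sub bb(1) by blast
  then obtain T g where h: "finite T" "\<forall>c\<in>T. g c \<in> Wt c \<and> (\<exists>m::'i\<Rightarrow>nat. c = (\<lambda>k. b k - of_nat (m k)))" "bb = sum g T"
    unfolding lowsum_def by blast
  obtain n0 where n0: "b = (\<lambda>i. lam i - of_nat (n0 i))" using below_nz[OF tg u(1) u(2)] by blast
  have lamT: "lam \<notin> T"
  proof
    assume "lam \<in> T"
    then obtain m where m: "lam = (\<lambda>k. b k - of_nat (m k))" using h(2) by blast
    have "\<forall>k. n0 k = 0"
    proof
      fix k
      from fun_cong[OF m, of k] have "lam k = lam k - of_nat (n0 k) - of_nat (m k)" by (simp add: n0)
      then show "n0 k = 0" by (rule nat_cancel)
    qed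
    then have "b = lam" using n0 by simp
    then show False using u(4) by simp
  qed
  define f where "f = g(lam := - bb)"
  have fw: "\<forall>c\<in>insert lam T. f c \<in> Wt c" using h(2) bb(1) lamT by (auto simp: f_def intro: wt_neg)
  have "sum f T = sum g T" using lamT by (intro sum.cong) (auto simp: f_def)
  then have "sum f (insert lam T) = 0" using h lamT by (simp add: f_def)
  then have "f lam = 0" using indep[OF tg _ fw] h(1) by blast
  then show False using bb(2) by (simp add: f_def)
qed

lemma xp_components:
  assumes tg: "top_graded_at B mu sc xi lam" and S: "finite S" "\<forall>b\<in>S. f b \<in> Wt b"
    and z: "xp i n (sum f S) = 0" and bS: "b \<in> S"
  shows "xp i n (f b) = 0"
proof -
  define h where "h c = xp i n (f (sh (\<lambda>k. - ev i k) c))" for c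
  have "sum h (sh (ev i) ` S) = 0" using z unfolding h_def xp_sum using sum_sh[of "\<lambda>b. xp i n (f b)" S "ev i"] by simp
  moreover have "\<forall>c\<in>sh (ev i) ` S. h c \<in> Wt c" using S(2) by (auto simp: h_def intro: wt_xp')
  ultimately have "\<forall>c\<in>sh (ev i) ` S. h c = 0" using indep[OF tg] S(1) by blast
  then show ?thesis using bS by (auto simp: h_def)
qed

lemma dirA:
  assumes tg: "top_graded_at B mu sc xi lam" and ch: "co_highest_l_weight B mu sc xp xm xi"
  shows "Wt lam = {v. \<forall>i n. xp i n v = 0}"
proof -
  obtain lam' where tg': "top_graded_at B mu sc xi lam'"
    and coh': "\<forall>W. is_submodule sc xp xm xi W \<and> W \<noteq> {0} \<longrightarrow> Wt lam' \<subseteq> W"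
    using ch unfolding co_highest_l_weight_def by blast
  have "dim (Wt lam) = 1" using tg unfolding top_graded_at_def by simp
  then obtain b1 where b1: "b1 \<in> Wt lam" "b1 \<noteq> 0" using dim1_basis by blast
  have "dim (Wt lam') = 1" using tg' unfolding top_graded_at_def by simp
  then obtain b2 where b2: "b2 \<in> Wt lam'" "b2 \<noteq> 0" using dim1_basis by blast
  obtain m1 where m1: "lam' = (\<lambda>i. lam i - of_nat (m1 i))" using below_nz[OF tg b2] by blast
  obtain m2 where m2: "lam = (\<lambda>i. lam' i - of_nat (m2 i))" using below_nz[OF tg' b1] by blast
  have "\<forall>k. m1 k = 0"
  proof
    fix k
    from fun_cong[OF m2, of k] have "lam k = lam k - of_nat (m1 k) - of_nat (m2 k)" by (simp add: m1)
    then show "m1 k = 0" by (rule nat_cancel)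
  qed
  then have "lam' = lam" using m1 by simp
  then have coh: "\<forall>W. is_submodule sc xp xm xi W \<and> W \<noteq> {0} \<longrightarrow> Wt lam \<subseteq> W" using coh' by simp
  show ?thesis
  proof (intro equalityI subsetI CollectI allI)
    fix v i n assume v: "v \<in> Wt lam"
    show "xp i n v = 0"
    proof (rule ccontr)
      assume nz: "xp i n v \<noteq> 0"
      have "xp i n v \<in> Wt (sh (ev i) lam)" using v by (rule wt_xp')
      then obtain m where m: "sh (ev i) lam = (\<lambda>k. lam k - of_nat (m k))" using below_nz[OF tg _ nz] by blast
      from fun_cong[OF m, of i] have "lam i + 1 = lam i - of_nat (m i)" by (simp add: sh_def ev_def)
      then have "lam i = lam i - of_nat (m i) - of_nat 1" by (simp add: algebra_simps)
      then have "(1::nat) = 0" using nat_cancel[of "lam i" 1 "m i"] by simp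
      then show False by simp
    qed
  next
    fix v assume "v \<in> {v. \<forall>i n. xp i n v = 0}"
    then have vK: "\<forall>i n. xp i n v = 0" by simp
    obtain S f where S: "finite S" "\<forall>b\<in>S. f b \<in> Wt b" "v = sum f S" using decomp[OF tg] by metis
    have fK: "\<forall>i n. xp i n (f b) = 0" if "b \<in> S" for b
      using xp_components[OF tg S(1,2) _ that] vK S(3) by blast
    have fz: "f b = 0" if "b \<in> S" "b \<noteq> lam" for b
      using no_hw[OF tg coh _ _ fK[OF that(1)] that(2)] S(2) that(1) by blast
    have "v = sum (\<lambda>b. if b = lam then f lam else 0) S"
      unfolding S(3) by (rule sum.cong) (auto simp: fz)
    also have "\<dots> = (if lam \<in> S then f lam else 0)" using S(1) by simp
    finally show "v \<in> Wt lam" using S(2) by auto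
  qed
qed

lemma climb:
  assumes tg: "top_graded_at B mu sc xi lam" and K: "Wt lam = {v. \<forall>i n. xp i n v = 0}"
    and W: "is_submodule sc xp xm xi W"
  shows "\<forall>w T f m. w \<in> W \<and> w \<noteq> 0 \<and> finite T \<and> (\<forall>c\<in>T. f c \<in> Wt c) \<and> w = sum f T \<and>
     (\<forall>c\<in>T. f c \<noteq> 0 \<longrightarrow> c = (\<lambda>k. lam k - of_nat (m c k)) \<and> sum (m c) UNIV \<le> (N::nat))
     \<longrightarrow> Wt lam \<subseteq> W"
proof (induction N rule: less_induct)
  case (less N)
  have Wsub: "subspace W" and Wxp: "\<And>i n w. w \<in> W \<Longrightarrow> xp i n w \<in> W"
    using W unfolding is_submodule_def by auto
  show ?case
  proof (intro allI impI, elim conjE)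
    fix w T f m
    assume wW: "w \<in> W" and w0: "w \<noteq> 0" and T: "finite T" and fT: "\<forall>c\<in>T. f c \<in> Wt c" and ws: "w = sum f T"
      and dep: "\<forall>c\<in>T. f c \<noteq> 0 \<longrightarrow> c = (\<lambda>k. lam k - of_nat (m c k)) \<and> sum (m c) UNIV \<le> N"
    show "Wt lam \<subseteq> W"
    proof (cases "\<forall>i n. xp i n w = 0")
      case True
      then have wl: "w \<in> Wt lam" using K by simp
      have "dim (Wt lam) = 1" using tg unfolding top_graded_at_def by simp
      then obtain bb where bb: "bb \<in> Wt lam" "bb \<noteq> 0" "Wt lam \<subseteq> range (\<lambda>k. sc k bb)"
        using dim1_basis by blast
      obtain k where k: "w = sc k bb" using wl bb(3) by blast
      then have k0: "k \<noteq> 0" using w0 by auto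
      have "bb = sc (inverse k) w" using k k0 by simp
      then have bbW: "bb \<in> W" using Wsub wW by (simp add: subspace_scale)
      show ?thesis
      proof
        fix x assume "x \<in> Wt lam"
        then obtain k' where "x = sc k' bb" using bb(3) by blast
        then show "x \<in> W" using bbW Wsub by (simp add: subspace_scale)
      qed
    next
      case False
      then obtain i n where xw: "xp i n w \<noteq> 0" by blast
      define d where "d = ev i"
      define T' where "T' = sh d ` T"
      define f' where "f' c = xp i n (f (sh (\<lambda>k. - d k) c))" for c
      define m' where "m' c = (SOME mm. c = (\<lambda>k. lam k - of_nat (mm k)))" for c
      have xs: "xp i n w = sum f' T'"
        unfolding ws xp_sum T'_def f'_def using sum_sh[of "\<lambda>b. xp i n (f b)" T d] by simp
      have fT': "\<forall>c\<in>T'. f' c \<in> Wt c" using fT by (auto simp: T'_def f'_def d_def intro: wt_xp')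
      have key: "c = (\<lambda>k. lam k - of_nat (m' c k)) \<and> sum (m' c) UNIV + 1 \<le> N"
        if cT: "c \<in> T'" and nz: "f' c \<noteq> 0" for c
      proof -
        obtain c0 where c0: "c0 \<in> T" "c = sh d c0" using cT by (auto simp: T'_def)
        have fc: "f' c = xp i n (f c0)" using c0 by (simp add: f'_def)
        then have "f c0 \<noteq> 0" using nz by auto
        then have c0m: "c0 = (\<lambda>k. lam k - of_nat (m c0 k))" and c0N: "sum (m c0) UNIV \<le> N"
          using dep c0(1) by auto
        have "\<exists>mm. c = (\<lambda>k. lam k - of_nat (mm k))" using below_nz[OF tg _ nz] fT' cT by blast
        then have cm: "c = (\<lambda>k. lam k - of_nat (m' c k))" unfolding m'_def by (rule someI_ex)
        have "(\<lambda>k. lam k - of_nat (m' c k)) = sh (ev i) (\<lambda>k. lam k - of_nat (m c0 k))"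
          using cm c0(2) c0m d_def by simp
        then have mc: "m c0 = (\<lambda>k. m' c k + (if k = i then 1 else 0))" by (rule coord_shift)
        have "sum (m c0) UNIV = sum (m' c) UNIV + sum (\<lambda>k. if k = i then 1 else 0) (UNIV::'i set)"
          unfolding mc by (simp add: sum.distrib)
        also have "\<dots> = sum (m' c) UNIV + 1" by simp
        finally show ?thesis using cm c0N by simp
      qed
      obtain c where c: "c \<in> T'" "f' c \<noteq> 0" using xw xs by (metis sum.neutral)
      then have N1: "1 \<le> N" using key by fastforce
      have "\<forall>c\<in>T'. f' c \<noteq> 0 \<longrightarrow> c = (\<lambda>k. lam k - of_nat (m' c k)) \<and> sum (m' c) UNIV \<le> N - 1"
        using key by fastforce
      moreover have "finite T'" using T by (simp add: T'_def)
      moreover have "xp i n w \<in> W" using wW by (rule Wxp)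
      moreover have lt: "N - 1 < N" using N1 by simp
      ultimately show ?thesis
        using less.IH[OF lt, rule_format, of "xp i n w" T' f' m'] xw xs fT' by blast
    qed
  qed
qed

lemma dirB:
  assumes tg: "top_graded_at B mu sc xi lam" and K: "Wt lam = {v. \<forall>i n. xp i n v = 0}"
  shows "co_highest_l_weight B mu sc xp xm xi"
  unfolding co_highest_l_weight_def
proof (intro exI conjI allI impI)
  show "top_graded_at B mu sc xi lam" by (rule tg)
  fix W assume "is_submodule sc xp xm xi W \<and> W \<noteq> {0}"
  then have W: "is_submodule sc xp xm xi W" and W0: "W \<noteq> {0}" by auto
  have "0 \<in> W" using W unfolding is_submodule_def subspace_def by blast
  then obtain w where wW: "w \<in> W" and w0: "w \<noteq> 0" using W0 by blast
  obtain S f where S: "finite S" "\<forall>b\<in>S. f b \<in> Wt b" "w = sum f S" using decomp[OF tg] by metis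
  define m where "m c = (SOME mm. c = (\<lambda>k. lam k - of_nat (mm k)))" for c
  define N where "N = sum (\<lambda>c. sum (m c) (UNIV::'i set)) S"
  have "\<forall>c\<in>S. f c \<noteq> 0 \<longrightarrow> c = (\<lambda>k. lam k - of_nat (m c k)) \<and> sum (m c) UNIV \<le> N"
  proof (intro ballI impI conjI)
    fix c assume cS: "c \<in> S" and nz: "f c \<noteq> 0"
    have "\<exists>mm. c = (\<lambda>k. lam k - of_nat (mm k))" using below_nz[OF tg _ nz] S(2) cS by blast
    then show "c = (\<lambda>k. lam k - of_nat (m c k))" unfolding m_def by (rule someI_ex)
    show "sum (m c) UNIV \<le> N" unfolding N_def using S(1) cS by (intro member_le_sum) auto
  qed
  then show "Wt lam \<subseteq> W" using climb[OF tg K W, of N] wW w0 S by blast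
qed

end

theorem lemma4p6:
  fixes B :: "'i::finite \<Rightarrow> 'i \<Rightarrow> int" and mu :: "'i \<Rightarrow> int"
    and sc :: "complex \<Rightarrow> 'v::ab_group_add \<Rightarrow> 'v"
    and xp xm :: "'i \<Rightarrow> nat \<Rightarrow> 'v \<Rightarrow> 'v" and xi :: "'i \<Rightarrow> int \<Rightarrow> 'v \<Rightarrow> 'v"
    and lam :: "'i \<Rightarrow> complex"
  assumes "simple_cartan_datum B"
    and "yangian_module B mu sc xp xm xi"
    and "top_graded_at B mu sc xi lam"
  shows "co_highest_l_weight B mu sc xp xm xi \<longleftrightarrow>
         weight_space B mu sc xi lam = {v. \<forall>i n. xp i n v = 0}"
proof -
  interpret ymod B mu sc xp xm xi by unfold_locales (rule assms(2))
  show ?thesis using dirA[OF assms(3)] dirB[OF assms(3)] by blast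
qed

end
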